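(* Let $U$ be a Hilbert space and $H: U \rightrightarrows U$ a set-valued map with $H^{-1}(0) \neq \emptyset$. For each $i \in \mathbb{N}$ let $\widetilde H_{i+1}: U \rightrightarrows U$ and $M_{i+1}, Z_{i+1} \in \mathcal{L}(U;U)$ with $Z_{i+1}M_{i+1}$ self-adjoint. Let $(u^i)_{i\in\mathbb{N}} \subset U$ satisfy \[ 0 \in \widetilde H_{i+1}(u^{i+1}) + M_{i+1}(u^{i+1}-u^i) \quad (i \in \mathbb{N}). \] Suppose that for every $i \in \mathbb{N}$ there is $\Delta_{i+1} \in \mathbb{R}$ such that for every $q \in \widetilde H_{i+1}(u^{i+1})$, \[ \tfrac{1}{2}\|u^{i+1}-u^i\|_{Z_{i+1}M_{i+1}}^2 + \inf_{u^* \in H^{-1}(0)}\Big( \tfrac12 \|u^{i+1}-u^*\|^2_{Z_{i+1}M_{i+1}} + \langle q, u^{i+1}-u^*\rangle_{Z_{i+1}}\Big) \ge \tfrac12 \operatorname{dist}^2_{Z_{i+2}M_{i+2}}(u^{i+1}, H^{-1}(0)) - \Delta_{i+1}. \] Then for all $N \ge 1$, \[ \tfrac12 \operatorname{dist}^2_{Z_{N+1}M_{N+1}}(u^N, H^{-1}(0)) \le \tfrac12 \operatorname{dist}^2_{Z_1M_1}(u^0, H^{-1}(0)) + \sum_{i=0}^{N-1}\Delta_{i+1}. \]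
   Context: $\mathbb{N}=\{0,1,2,\dots\}$. $\mathcal{L}(U;U)$ denotes bounded linear operators on $U$. For $T \in \mathcal{L}(U;U)$ (not necessarily self-adjoint or positive) write $\langle x, z\rangle_T := \langle Tx, z\rangle$, $\|x\|_T^2 := \langle Tx, x\rangle$, and for $A \subset U$, $\operatorname{dist}^2_T(z, A) := \inf_{u \in A}\|z-u\|_T^2$. $H^{-1}(0) := \{u \in U : 0 \in H(u)\}$. *)

theory Defs
  imports "HOL-Analysis.Analysis"
begin

text \<open>The distance is an infimum which may be
unbounded below, hence it is taken in the extended reals.\<close>

definition inner_op :: "('a::real_inner \<Rightarrow> 'a) \<Rightarrow> 'a \<Rightarrow> 'a \<Rightarrow> real" where
  "inner_op T x z = inner (T x) z"

definition normsq_op :: "('a::real_inner \<Rightarrow> 'a) \<Rightarrow> 'a \<Rightarrow> real" where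
  "normsq_op T x = inner (T x) x"

definition distsq_op :: "('a::real_inner \<Rightarrow> 'a) \<Rightarrow> 'a \<Rightarrow> 'a set \<Rightarrow> ereal" where
  "distsq_op T z A = (INF u\<in>A. ereal (normsq_op T (z - u)))"

definition zeros_of :: "('a::real_inner \<Rightarrow> 'a set) \<Rightarrow> 'a set" where
  "zeros_of H = {u. 0 \<in> H u}"

end

theory Submission
  imports Defs
begin

lemma aux1: fixes x y :: ereal shows "x \<le> ereal c + y \<Longrightarrow> x - ereal c \<le> y"
  by (cases x; cases y) (auto simp: algebra_simps)
lemma aux2: fixes x y :: ereal shows "x - ereal c \<le> y \<Longrightarrow> x \<le> ereal c + y"
  by (cases x; cases y) (auto simp: algebra_simps)
lemma ereal_INF_add_const:
  fixes c :: real and g :: "'b \<Rightarrow> ereal"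
  shows "ereal c + (INF i\<in>I. g i) = (INF i\<in>I. ereal c + g i)"
proof (rule antisym)
  show "ereal c + (INF i\<in>I. g i) \<le> (INF i\<in>I. ereal c + g i)"
    by (rule INF_greatest, rule add_left_mono, rule INF_lower)
next
  have "(INF i\<in>I. ereal c + g i) - ereal c \<le> (INF i\<in>I. g i)"
  proof (rule INF_greatest)
    fix i assume "i \<in> I"
    hence "(INF i\<in>I. ereal c + g i) \<le> ereal c + g i" by (rule INF_lower)
    thus "(INF i\<in>I. ereal c + g i) - ereal c \<le> g i"
      by (rule aux1)
  qed
  thus "(INF i\<in>I. ereal c + g i) \<le> ereal c + (INF i\<in>I. g i)"
    by (rule aux2)
qed

lemma three_point:
  assumes L: "linear L" and sa: "\<And>x y. inner (L x) y = inner x (L y)"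
  shows "1/2 * inner (L (a-b)) (a-b) + (1/2 * inner (L (a-c)) (a-c) - inner (L (a-b)) (a-c))
         = 1/2 * inner (L (b-c)) (b-c)"
proof -
  have e: "b - c = (a-c) - (a-b)" by simp
  have "inner (L (b-c)) (b-c) = inner (L (a-c)) (a-c) - inner (L (a-c)) (a-b) - inner (L (a-b)) (a-c) + inner (L (a-b)) (a-b)"
    unfolding e using linear_diff[OF L] by (simp add: inner_diff_left inner_diff_right)
  moreover have "inner (L (a-c)) (a-b) = inner (L (a-b)) (a-c)" using sa by (metis inner_commute)
  ultimately show ?thesis by (simp add: field_simps)
qed

lemma ereal_INF_cmult:
  fixes c :: real and g :: "'b \<Rightarrow> ereal" assumes "c > 0"
  shows "ereal c * (INF i\<in>I. g i) = (INF i\<in>I. ereal c * g i)"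
proof -
  have "{ereal c * x |x. x \<in> g ` I} = (\<lambda>i. ereal c * g i) ` I" by auto
  moreover have "{x. x \<in> g ` I} = g ` I" by auto
  ultimately show ?thesis using ereal_Inf_cmult[OF assms, of "\<lambda>x. x \<in> g ` I"] by simp
qed
theorem theorem3p1:
  fixes H :: "'a::{real_inner, complete_space} \<Rightarrow> 'a set"
    and Ht :: "nat \<Rightarrow> 'a \<Rightarrow> 'a set"
    and M Z :: "nat \<Rightarrow> 'a \<Rightarrow> 'a"
    and u :: "nat \<Rightarrow> 'a"
    and \<Delta> :: "nat \<Rightarrow> real"
  assumes nonempty: "zeros_of H \<noteq> {}"
    and M_bl: "\<And>i. bounded_linear (M (i + 1))"
    and Z_bl: "\<And>i. bounded_linear (Z (i + 1))"
    and selfadj: "\<And>i x y. inner (Z (i + 1) (M (i + 1) x)) y = inner x (Z (i + 1) (M (i + 1) y))"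
    and iter: "\<And>i. 0 \<in> (\<lambda>q. q + M (i + 1) (u (i + 1) - u i)) ` Ht (i + 1) (u (i + 1))"
    and desc: "\<And>i q. q \<in> Ht (i + 1) (u (i + 1)) \<Longrightarrow>
      ereal (1/2 * normsq_op (Z (i + 1) \<circ> M (i + 1)) (u (i + 1) - u i))
      + (INF us\<in>zeros_of H. ereal (1/2 * normsq_op (Z (i + 1) \<circ> M (i + 1)) (u (i + 1) - us)
                                   + inner_op (Z (i + 1)) q (u (i + 1) - us)))
      \<ge> ereal (1/2) * distsq_op (Z (i + 2) \<circ> M (i + 2)) (u (i + 1)) (zeros_of H) - ereal (\<Delta> (i + 1))"
  shows "\<And>N. N \<ge> 1 \<Longrightarrow>
      ereal (1/2) * distsq_op (Z (N + 1) \<circ> M (N + 1)) (u N) (zeros_of H)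
      \<le> ereal (1/2) * distsq_op (Z 1 \<circ> M 1) (u 0) (zeros_of H) + ereal (\<Sum>i<N. \<Delta> (i + 1))"
proof -
  define a where "a n = ereal (1/2) * distsq_op (Z (n + 1) \<circ> M (n + 1)) (u n) (zeros_of H)" for n
  have step: "a (Suc i) \<le> a i + ereal (\<Delta> (i + 1))" for i
  proof -
    let ?L = "Z (i + 1) \<circ> M (i + 1)"
    have L: "linear ?L" using M_bl[of i] Z_bl[of i]
      by (simp add: bounded_linear.linear linear_compose)
    have LZ: "linear (Z (i + 1))" using Z_bl[of i] by (simp add: bounded_linear.linear)
    have sa: "\<And>x y. inner (?L x) y = inner x (?L y)" using selfadj by simp
    obtain q where q: "q \<in> Ht (i + 1) (u (i + 1))" and q0: "0 = q + M (i + 1) (u (i + 1) - u i)"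
      using iter[of i] by auto
    have qe: "q = - M (i + 1) (u (i + 1) - u i)" using q0 by (simp add: eq_neg_iff_add_eq_0)
    define c where "c = 1/2 * normsq_op ?L (u (i + 1) - u i)"
    have pt: "ereal c + ereal (1/2 * normsq_op ?L (u (i + 1) - us) + inner_op (Z (i + 1)) q (u (i + 1) - us))
        = ereal (1/2 * normsq_op ?L (u i - us))" for us
    proof -
      have "inner_op (Z (i + 1)) q (u (i + 1) - us) = - inner (?L (u (i + 1) - u i)) (u (i + 1) - us)"
        unfolding inner_op_def qe using linear_neg[OF LZ] by simp
      thus ?thesis unfolding c_def normsq_op_def
        using three_point[OF L sa, of "u (i+1)" "u i" us] by simp
    qed
    have "ereal c + (INF us\<in>zeros_of H. ereal (1/2 * normsq_op ?L (u (i + 1) - us) + inner_op (Z (i + 1)) q (u (i + 1) - us)))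
       = (INF us\<in>zeros_of H. ereal (1/2 * normsq_op ?L (u i - us)))"
      unfolding ereal_INF_add_const pt by simp
    also have "\<dots> = (INF us\<in>zeros_of H. ereal (1/2) * ereal (normsq_op ?L (u i - us)))" by simp
    also have "\<dots> = a i" unfolding a_def distsq_op_def
      by (subst ereal_INF_cmult) simp_all
    finally have eq: "ereal c + (INF us\<in>zeros_of H. ereal (1/2 * normsq_op ?L (u (i + 1) - us) + inner_op (Z (i + 1)) q (u (i + 1) - us))) = a i" .
    have d: "a (Suc i) - ereal (\<Delta> (i + 1)) \<le> ereal c + (INF us\<in>zeros_of H. ereal (1/2 * normsq_op ?L (u (i + 1) - us) + inner_op (Z (i + 1)) q (u (i + 1) - us)))"
      using desc[OF q] unfolding c_def a_def by (simp add: numeral_2_eq_2)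
    have "a (Suc i) - ereal (\<Delta> (i + 1)) \<le> a i" using d unfolding eq .
    from aux2[OF this] show ?thesis by (simp add: add.commute)
  qed
  have all: "a N \<le> a 0 + ereal (\<Sum>i<N. \<Delta> (i + 1))" for N
  proof (induction N)
    case 0 show ?case by simp
  next
    case (Suc N)
    have "a (Suc N) \<le> a N + ereal (\<Delta> (N + 1))" by (rule step)
    also have "\<dots> \<le> a 0 + ereal (\<Sum>i<N. \<Delta> (i + 1)) + ereal (\<Delta> (N + 1))"
      using Suc.IH by (rule add_right_mono)
    also have "\<dots> = a 0 + ereal (\<Sum>i<Suc N. \<Delta> (i + 1))"
      by (simp add: add.assoc)
    finally show ?case .
  qed
  show "\<And>N. N \<ge> 1 \<Longrightarrow> ereal (1/2) * distsq_op (Z (N + 1) \<circ> M (N + 1)) (u N) (zeros_of H)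
      \<le> ereal (1/2) * distsq_op (Z 1 \<circ> M 1) (u 0) (zeros_of H) + ereal (\<Sum>i<N. \<Delta> (i + 1))"
    using all unfolding a_def by simp
qed

end
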